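(* Let $m\ge1$ and let $\mathcal C\subseteq\mathbb Z^m$ be a code with minimum distance $d_a(\mathcal C)=d$. Then: (i) for all non-negative integers $r^+,r^-$ with $r^++r^-<d$, $\overline\mu(\mathcal C)\le|S_m(r^+,r^-)|^{-1}$; (ii) if $2\le d\le 2m+1$, then $\overline\mu(\mathcal C)<\lceil\tfrac{d-1}{2}\rceil!\,\lfloor\tfrac{d-1}{2}\rfloor!\,\big(m+1-\lceil\tfrac{d-1}{2}\rceil\big)^{1-d}$; (iii) if $1\le m<d$, then $\overline\mu(\mathcal C)<2^m (m!)^3\,((2m)!)^{-1}(d-m)^{-m}$.
   Context: $d_a(\mathbf x,\mathbf y)=\max\{\sum_{i:x_i>y_i}(x_i-y_i),\sum_{i:x_i<y_i}(y_i-x_i)\}$ on $\mathbb Z^m$; $d_a(\mathcal C)$ is the minimum distance. $S_m(r^+,r^-)=\{\mathbf x\in\mathbb Z^m:\sum_{i:x_i>0}x_i\le r^+,\ \sum_{i:x_i<0}|x_i|\le r^-\}$. The upper density is $\overline\mu(\mathcal C)=\limsup_{k\to\infty}|\mathcal C\cap\{-k,\dots,k\}^m|/(2k+1)^m$. *)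

theory Defs
  imports Complex_Main "HOL-Library.Extended_Real"
begin

text \<open>Z^m is represented by integer sequences vanishing at indices >= m.\<close>
definition zvec :: "nat \<Rightarrow> (nat \<Rightarrow> int) set" where
  "zvec m = {x. \<forall>i\<ge>m. x i = 0}"

definition dist_a :: "nat \<Rightarrow> (nat \<Rightarrow> int) \<Rightarrow> (nat \<Rightarrow> int) \<Rightarrow> int" where
  "dist_a m x y = max (\<Sum>i\<in>{i. i < m \<and> x i > y i}. x i - y i)
                      (\<Sum>i\<in>{i. i < m \<and> x i < y i}. y i - x i)"

definition has_min_dist :: "nat \<Rightarrow> (nat \<Rightarrow> int) set \<Rightarrow> int \<Rightarrow> bool" where
  "has_min_dist m C d \<longleftrightarrow>
     (\<forall>x\<in>C. \<forall>y\<in>C. x \<noteq> y \<longrightarrow> d \<le> dist_a m x y) \<and>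
     (\<exists>x\<in>C. \<exists>y\<in>C. x \<noteq> y \<and> dist_a m x y = d)"

definition S_ball :: "nat \<Rightarrow> nat \<Rightarrow> nat \<Rightarrow> (nat \<Rightarrow> int) set" where
  "S_ball m rp rm = {x \<in> zvec m.
      (\<Sum>i\<in>{i. i < m \<and> x i > 0}. x i) \<le> int rp \<and>
      (\<Sum>i\<in>{i. i < m \<and> x i < 0}. \<bar>x i\<bar>) \<le> int rm}"

definition cube :: "nat \<Rightarrow> nat \<Rightarrow> (nat \<Rightarrow> int) set" where
  "cube m k = {x \<in> zvec m. \<forall>i<m. - int k \<le> x i \<and> x i \<le> int k}"

definition upper_density :: "nat \<Rightarrow> (nat \<Rightarrow> int) set \<Rightarrow> ereal" where
  "upper_density m C =
     limsup (\<lambda>k. ereal (real (card (C \<inter> cube m k)) / real (2 * k + 1) ^ m))"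

end

theory Submission
  imports Defs
begin


definition posS :: "nat \<Rightarrow> (nat \<Rightarrow> int) \<Rightarrow> int" where
  "posS m x = (\<Sum>i<m. max (x i) 0)"
definition negS :: "nat \<Rightarrow> (nat \<Rightarrow> int) \<Rightarrow> int" where
  "negS m x = (\<Sum>i<m. max (- x i) 0)"

lemma posS_eq: "(\<Sum>i\<in>{i. i < m \<and> x i > 0}. x i) = posS m x"
proof -
  have "{i. i < m \<and> x i > 0} = {i\<in>{..<m}. x i > 0}" by auto
  then have "(\<Sum>i\<in>{i. i < m \<and> x i > 0}. x i) = (\<Sum>i\<in>{..<m}. if x i > 0 then x i else 0)"
    using sum.inter_filter[of "{..<m}" x "\<lambda>i. x i > 0"] by simp
  also have "\<dots> = posS m x" unfolding posS_def by (rule sum.cong) auto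
  finally show ?thesis .
qed

lemma negS_eq: "(\<Sum>i\<in>{i. i < m \<and> x i < 0}. \<bar>x i\<bar>) = negS m x"
proof -
  have "{i. i < m \<and> x i < 0} = {i\<in>{..<m}. x i < 0}" by auto
  then have "(\<Sum>i\<in>{i. i < m \<and> x i < 0}. \<bar>x i\<bar>) = (\<Sum>i\<in>{..<m}. if x i < 0 then \<bar>x i\<bar> else 0)"
    using sum.inter_filter[of "{..<m}" "\<lambda>i. \<bar>x i\<bar>" "\<lambda>i. x i < 0"] by simp
  also have "\<dots> = negS m x" unfolding negS_def by (rule sum.cong) auto
  finally show ?thesis .
qed

lemma dist_a_eq: "dist_a m x y = max (posS m (\<lambda>i. x i - y i)) (negS m (\<lambda>i. x i - y i))"
proof -
  have 1: "(\<Sum>i\<in>{i. i < m \<and> x i > y i}. x i - y i) = posS m (\<lambda>i. x i - y i)"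
    using posS_eq[where m=m and x="\<lambda>i. x i - y i"] by simp
  have 2: "(\<Sum>i\<in>{i. i < m \<and> x i < y i}. y i - x i) = negS m (\<lambda>i. x i - y i)"
    using negS_eq[where m=m and x="\<lambda>i. x i - y i"] by simp
  show ?thesis unfolding dist_a_def 1 2 ..
qed

lemma S_ball_alt: "S_ball m a b = {x\<in>zvec m. posS m x \<le> int a \<and> negS m x \<le> int b}"
  unfolding S_ball_def posS_eq negS_eq ..

lemma posS_nonneg: "posS m x \<ge> 0" unfolding posS_def by (rule sum_nonneg) auto
lemma negS_nonneg: "negS m x \<ge> 0" unfolding negS_def by (rule sum_nonneg) auto

lemma posS_upd: "posS m (x(m:=t)) = posS m x" unfolding posS_def by (rule sum.cong) auto
lemma negS_upd: "negS m (x(m:=t)) = negS m x" unfolding negS_def by (rule sum.cong) auto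
lemma posS_Suc: "posS (Suc m) x = posS m x + max (x m) 0" unfolding posS_def by simp
lemma negS_Suc: "negS (Suc m) x = negS m x + max (- x m) 0" unfolding negS_def by simp

lemma zvec_upd: "x \<in> zvec m \<Longrightarrow> x(m:=t) \<in> zvec (Suc m)" unfolding zvec_def by auto
lemma zvec_Suc_restrict: "x \<in> zvec (Suc m) \<Longrightarrow> x(m:=0) \<in> zvec m" unfolding zvec_def by auto

lemma upd_restore: "x \<in> zvec (Suc m) \<Longrightarrow> (x(m:=0))(m := x m) = x" by auto

lemma cube_Suc_sub: "cube (Suc m) K \<subseteq> (\<Union>t\<in>{-int K..int K}. (\<lambda>x. x(m:=t)) ` cube m K)"
proof
  fix x assume x: "x \<in> cube (Suc m) K"
  then have "x(m:=0) \<in> cube m K" unfolding cube_def zvec_def by auto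
  moreover have "x m \<in> {-int K..int K}" using x unfolding cube_def by auto
  moreover have "x = (x(m:=0))(m := x m)" by auto
  ultimately show "x \<in> (\<Union>t\<in>{-int K..int K}. (\<lambda>x. x(m:=t)) ` cube m K)" by blast
qed

lemma cube_0: "cube 0 K = {\<lambda>_. 0}" unfolding cube_def zvec_def by auto

lemma cube_fin_card: "finite (cube m K) \<and> card (cube m K) \<le> (2*K+1)^m"
proof (induction m)
  case 0 then show ?case by (simp add: cube_0)
next
  case (Suc m)
  have fin: "finite (\<Union>t\<in>{-int K..int K}. (\<lambda>x. x(m:=t)) ` cube m K)" using Suc by auto
  have "card (cube (Suc m) K) \<le> card (\<Union>t\<in>{-int K..int K}. (\<lambda>x. x(m:=t)) ` cube m K)"
    by (rule card_mono[OF fin cube_Suc_sub])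
  also have "\<dots> \<le> (\<Sum>t\<in>{-int K..int K}. card ((\<lambda>x. x(m:=t)) ` cube m K))"
    by (rule card_UN_le) simp
  also have "\<dots> \<le> (\<Sum>t\<in>{-int K..int K}. (2*K+1)^m)"
    by (rule sum_mono) (meson Suc.IH card_image_le le_trans)
  also have "\<dots> = (2*K+1)^Suc m"
  proof -
    have "nat (2 * int K + 1) = 2*K+1" by simp
    then show ?thesis by simp
  qed
  finally show ?case using finite_subset[OF cube_Suc_sub fin] by simp
qed

lemma S_ball_sub_cube: "S_ball m a b \<subseteq> cube m (max a b)"
proof
  fix x assume x: "x \<in> S_ball m a b"
  then have z: "x \<in> zvec m" and p: "posS m x \<le> int a" and n: "negS m x \<le> int b"
    by (auto simp: S_ball_alt)
  have "- int (max a b) \<le> x i \<and> x i \<le> int (max a b)" if "i < m" for i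
  proof -
    have "max (x i) 0 \<le> posS m x" unfolding posS_def
      by (rule member_le_sum[where f="\<lambda>i. max (x i) 0"]) (use that in auto)
    moreover have "max (- x i) 0 \<le> negS m x" unfolding negS_def
      by (rule member_le_sum[where f="\<lambda>i. max (- x i) 0"]) (use that in auto)
    ultimately show ?thesis using p n by auto
  qed
  then show "x \<in> cube m (max a b)" using z unfolding cube_def by auto
qed

lemma S_ball_finite: "finite (S_ball m a b)"
  using finite_subset[OF S_ball_sub_cube] cube_fin_card by blast

lemma S_decomp: "S_ball (Suc m) a b =
   (\<Union>s\<in>{..a}. (\<lambda>x. x(m:=int(a - s))) ` S_ball m s b) \<union>
   (\<Union>s\<in>{..<b}. (\<lambda>x. x(m:= - int(b-s))) ` S_ball m a s)"
proof (intro equalityI subsetI)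
  fix x assume x: "x \<in> S_ball (Suc m) a b"
  then have z: "x \<in> zvec (Suc m)" and p: "posS (Suc m) x \<le> int a" and n: "negS (Suc m) x \<le> int b"
    by (auto simp: S_ball_alt)
  let ?y = "x(m:=0)"
  have zy: "?y \<in> zvec m" using z by (rule zvec_Suc_restrict)
  have py: "posS m ?y = posS m x" and ny: "negS m ?y = negS m x" by (rule posS_upd, rule negS_upd)
  have ex: "x = ?y(m := x m)" by auto
  show "x \<in> (\<Union>s\<in>{..a}. (\<lambda>x. x(m:=int(a - s))) ` S_ball m s b) \<union>
   (\<Union>s\<in>{..<b}. (\<lambda>x. x(m:= - int(b-s))) ` S_ball m a s)"
  proof (cases "x m \<ge> 0")
    case True
    define s where "s = a - nat (x m)"
    have "x m \<le> int a" using p posS_nonneg[of m x] True by (simp add: posS_Suc)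
    then have s1: "int (a - s) = x m" and s2: "s \<le> a" and s3: "int s = int a - x m"
      using True unfolding s_def by auto
    have "?y \<in> S_ball m s b" unfolding S_ball_alt using zy py ny p n True s3
      by (auto simp: posS_Suc negS_Suc)
    then have "x \<in> (\<lambda>x. x(m:=int(a - s))) ` S_ball m s b" using ex s1 by (metis image_eqI)
    then show ?thesis using s2 by blast
  next
    case False
    define s where "s = b - nat (- x m)"
    have "- x m \<le> int b" using n negS_nonneg[of m x] False by (simp add: negS_Suc)
    then have s1: "- int (b - s) = x m" and s2: "s < b" and s3: "int s = int b + x m"
      using False unfolding s_def by auto
    have "?y \<in> S_ball m a s" unfolding S_ball_alt using zy py ny p n False s3
      by (auto simp: posS_Suc negS_Suc)
    then have "x \<in> (\<lambda>x. x(m:= - int(b - s))) ` S_ball m a s" using ex s1 by (metis image_eqI)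
    then show ?thesis using s2 by blast
  qed
next
  fix x assume "x \<in> (\<Union>s\<in>{..a}. (\<lambda>x. x(m:=int(a - s))) ` S_ball m s b) \<union>
   (\<Union>s\<in>{..<b}. (\<lambda>x. x(m:= - int(b-s))) ` S_ball m a s)"
  then show "x \<in> S_ball (Suc m) a b"
  proof (elim UnE UN_E imageE)
    fix s y assume s: "s \<in> {..a}" and y: "y \<in> S_ball m s b" and xy: "x = y(m := int (a - s))"
    then show ?thesis using y unfolding S_ball_alt
      by (auto simp: posS_Suc negS_Suc posS_upd negS_upd zvec_upd)
  next
    fix s y assume s: "s \<in> {..<b}" and y: "y \<in> S_ball m a s" and xy: "x = y(m := - int (b - s))"
    then show ?thesis using y unfolding S_ball_alt
      by (auto simp: posS_Suc negS_Suc posS_upd negS_upd zvec_upd)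
  qed
qed

lemma inj_upd: "inj_on (\<lambda>x. x(m:=t)) (S_ball m a b)"
proof (rule inj_onI)
  fix x y assume "x \<in> S_ball m a b" "y \<in> S_ball m a b" "x(m:=t) = y(m:=t)"
  then have "x m = 0" "y m = 0" and e: "x(m:=t) = y(m:=t)"
    by (auto simp: S_ball_def zvec_def)
  have "x i = y i" for i
  proof (cases "i = m")
    case True then show ?thesis using \<open>x m = 0\<close> \<open>y m = 0\<close> by simp
  next
    case False
    have "(x(m:=t)) i = (y(m:=t)) i" using e by simp
    then show ?thesis using False by simp
  qed
  then show "x = y" by (rule ext)
qed

lemma card_S_Suc: "card (S_ball (Suc m) a b) =
   (\<Sum>s\<le>a. card (S_ball m s b)) + (\<Sum>s<b. card (S_ball m a s))"
proof -
  let ?A = "\<Union>s\<in>{..a}. (\<lambda>x. x(m:=int(a - s))) ` S_ball m s b"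
  let ?B = "\<Union>s\<in>{..<b}. (\<lambda>x. x(m:= - int(b-s))) ` S_ball m a s"
  have cA: "card ?A = (\<Sum>s\<le>a. card (S_ball m s b))"
  proof (subst card_UN_disjoint)
    show "\<forall>i\<in>{..a}. \<forall>j\<in>{..a}. i \<noteq> j \<longrightarrow>
      (\<lambda>x. x(m:=int(a - i))) ` S_ball m i b \<inter> (\<lambda>x. x(m:=int(a - j))) ` S_ball m j b = {}"
      by (auto dest!: fun_cong[where x=m])
    show "(\<Sum>i\<le>a. card ((\<lambda>x. x(m:=int(a - i))) ` S_ball m i b)) = (\<Sum>s\<le>a. card (S_ball m s b))"
      by (rule sum.cong[OF refl], rule card_image, rule inj_upd)
  qed (auto simp: S_ball_finite)
  have cB: "card ?B = (\<Sum>s<b. card (S_ball m a s))"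
  proof (subst card_UN_disjoint)
    show "\<forall>i\<in>{..<b}. \<forall>j\<in>{..<b}. i \<noteq> j \<longrightarrow>
      (\<lambda>x. x(m:= - int(b - i))) ` S_ball m a i \<inter> (\<lambda>x. x(m:= - int(b - j))) ` S_ball m a j = {}"
      by (auto dest!: fun_cong[where x=m])
    show "(\<Sum>i<b. card ((\<lambda>x. x(m:= - int(b - i))) ` S_ball m a i)) = (\<Sum>s<b. card (S_ball m a s))"
      by (rule sum.cong[OF refl], rule card_image, rule inj_upd)
  qed (auto simp: S_ball_finite)
  have dj: "?A \<inter> ?B = {}"
  proof (rule ccontr)
    assume "?A \<inter> ?B \<noteq> {}"
    then obtain x where xA: "x \<in> ?A" and xB: "x \<in> ?B" by blast
    from xA obtain s y where "s \<le> a" "x = y(m:=int(a - s))" by auto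
    then have 1: "x m \<ge> 0" by simp
    from xB obtain s y where "s < b" "x = y(m:= - int(b - s))" by auto
    then have "x m < 0" by simp
    then show False using 1 by simp
  qed
  have fA: "finite ?A" and fB: "finite ?B" by (auto simp: S_ball_finite)
  have "card (?A \<union> ?B) = card ?A + card ?B" by (rule card_Un_disjoint[OF fA fB dj])
  then show ?thesis unfolding S_decomp cA cB .
qed



definition g :: "nat \<Rightarrow> nat \<Rightarrow> nat \<Rightarrow> nat" where
  "g m a b = (\<Sum>k\<le>m. (m choose k) * (a choose k) * ((b + (m-k)) choose (m-k)))"

lemma sum_choose_lower': "(\<Sum>s<b. (s + n) choose n) = (b + n) choose Suc n"
  by (induction b) auto

lemma g_rec: "(\<Sum>s\<le>a. g m s b) + (\<Sum>s<b. g m a s) = g (Suc m) a b"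
proof -
  have 1: "(\<Sum>s\<le>a. g m s b) = (\<Sum>k\<le>m. (m choose k) * ((b + (m-k)) choose (m-k)) * (Suc a choose Suc k))"
  proof -
    have "(\<Sum>s\<le>a. g m s b) = (\<Sum>k\<le>m. \<Sum>s\<le>a. (m choose k) * ((b + (m-k)) choose (m-k)) * (s choose k))"
      unfolding g_def by (subst sum.swap) (simp add: algebra_simps)
    also have "\<dots> = (\<Sum>k\<le>m. (m choose k) * ((b + (m-k)) choose (m-k)) * (Suc a choose Suc k))"
      by (simp add: sum_distrib_left[symmetric] sum_choose_upper)
    finally show ?thesis .
  qed
  have 2: "(\<Sum>s<b. g m a s) = (\<Sum>k\<le>m. (m choose k) * (a choose k) * ((b + (m-k)) choose Suc (m-k)))"
  proof -
    have "(\<Sum>s<b. g m a s) = (\<Sum>k\<le>m. \<Sum>s<b. (m choose k) * (a choose k) * ((s + (m-k)) choose (m-k)))"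
      unfolding g_def by (subst sum.swap) (simp add: algebra_simps)
    also have "\<dots> = (\<Sum>k\<le>m. (m choose k) * (a choose k) * ((b + (m-k)) choose Suc (m-k)))"
      by (rule sum.cong[OF refl]) (simp only: sum_distrib_left[symmetric] sum_choose_lower')
    finally show ?thesis .
  qed
  define p where "p j = (m choose j) * (a choose j) * ((b + (Suc m - j)) choose (Suc m - j))" for j
  have L: "(\<Sum>s\<le>a. g m s b) + (\<Sum>s<b. g m a s) =
     (\<Sum>k\<le>m. (m choose k) * (a choose Suc k) * ((b + (m-k)) choose (m-k))) + (\<Sum>k\<le>m. p k)"
  proof -
    have "(\<Sum>s\<le>a. g m s b) + (\<Sum>s<b. g m a s) = (\<Sum>k\<le>m.
       (m choose k) * ((b + (m-k)) choose (m-k)) * (Suc a choose Suc k) +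
       (m choose k) * (a choose k) * ((b + (m-k)) choose Suc (m-k)))"
      unfolding 1 2 sum.distrib ..
    also have "\<dots> = (\<Sum>k\<le>m. (m choose k) * (a choose Suc k) * ((b + (m-k)) choose (m-k)) + p k)"
    proof (rule sum.cong[OF refl])
      fix k assume k: "k \<in> {..m}"
      have e: "Suc m - k = Suc (m - k)" using k by auto
      have "(b + Suc (m-k)) choose Suc (m-k) = ((b + (m-k)) choose (m-k)) + ((b + (m-k)) choose Suc (m-k))"
        by simp
      then show "(m choose k) * ((b + (m-k)) choose (m-k)) * (Suc a choose Suc k) +
       (m choose k) * (a choose k) * ((b + (m-k)) choose Suc (m-k)) =
       (m choose k) * (a choose Suc k) * ((b + (m-k)) choose (m-k)) + p k"
        unfolding p_def e by (simp add: algebra_simps)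
    qed
    finally show ?thesis by (simp add: sum.distrib)
  qed
  have R1: "g (Suc m) a b = ((b + Suc m) choose Suc m) +
       (\<Sum>k\<le>m. (Suc m choose Suc k) * (a choose Suc k) * ((b + (m-k)) choose (m-k)))"
    unfolding g_def by (subst sum.atMost_Suc_shift) simp
  have P: "(\<Sum>k\<le>m. p k) = ((b + Suc m) choose Suc m) +
       (\<Sum>k\<le>m. (m choose Suc k) * (a choose Suc k) * ((b + (m-k)) choose (m-k)))"
  proof -
    have "(\<Sum>k\<le>m. p k) = (\<Sum>k\<le>Suc m. p k)" by (simp add: p_def)
    also have "\<dots> = p 0 + (\<Sum>k\<le>m. p (Suc k))" by (rule sum.atMost_Suc_shift)
    finally show ?thesis by (simp add: p_def)
  qed
  show ?thesis unfolding L R1 P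
    by (simp add: sum.distrib[symmetric] algebra_simps)
qed

lemma S_ball_0: "S_ball 0 a b = {\<lambda>_. 0}"
  unfolding S_ball_def zvec_def by auto

lemma card_S_g: "card (S_ball m a b) = g m a b"
proof (induction m arbitrary: a b)
  case 0 then show ?case by (simp add: S_ball_0 g_def)
next
  case (Suc m) then show ?case by (simp add: card_S_Suc g_rec[symmetric])
qed



lemma translate_in_cube:
  assumes c: "c \<in> cube m k" and s: "s \<in> S_ball m rp rm"
  shows "(\<lambda>i. c i + s i) \<in> cube m (k + max rp rm)"
proof -
  have "s \<in> cube m (max rp rm)" using s S_ball_sub_cube by blast
  then have s1: "s \<in> zvec m" and s2: "\<And>i. i < m \<Longrightarrow> - int (max rp rm) \<le> s i \<and> s i \<le> int (max rp rm)"
    unfolding cube_def by auto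
  have c1: "c \<in> zvec m" and c2: "\<And>i. i < m \<Longrightarrow> - int k \<le> c i \<and> c i \<le> int k"
    using c unfolding cube_def by auto
  have "- int (k + max rp rm) \<le> c i + s i \<and> c i + s i \<le> int (k + max rp rm)" if "i < m" for i
    using s2[OF that] c2[OF that] by simp
  moreover have "(\<lambda>i. c i + s i) \<in> zvec m" using s1 c1 unfolding zvec_def by auto
  ultimately show ?thesis unfolding cube_def by auto
qed

lemma pos_diff_le: "posS m (\<lambda>i. s' i - s i) \<le> posS m s' + negS m s"
  unfolding posS_def negS_def sum.distrib[symmetric] by (rule sum_mono) auto
lemma neg_diff_le: "negS m (\<lambda>i. s' i - s i) \<le> negS m s' + posS m s"
  unfolding posS_def negS_def sum.distrib[symmetric] by (rule sum_mono) auto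

lemma packing:
  assumes mind: "\<forall>x\<in>C. \<forall>y\<in>C. x \<noteq> y \<longrightarrow> d \<le> dist_a m x y"
    and r: "int rp + int rm < d"
  shows "card (C \<inter> cube m k) * card (S_ball m rp rm) \<le> (2*(k + max rp rm)+1)^m"
proof -
  let ?S = "S_ball m rp rm"
  let ?D = "C \<inter> cube m k"
  let ?T = "\<lambda>c. (\<lambda>s. \<lambda>i. c i + s i) ` ?S"
  have finD: "finite ?D" using cube_fin_card[of m k] by auto
  have disj: "?T c \<inter> ?T c' = {}" if "c \<in> ?D" "c' \<in> ?D" "c \<noteq> c'" for c c'
  proof (rule ccontr)
    assume "?T c \<inter> ?T c' \<noteq> {}"
    then obtain s s' where s: "s \<in> ?S" and s': "s' \<in> ?S" and e: "(\<lambda>i. c i + s i) = (\<lambda>i. c' i + s' i)"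
      by auto
    have ei: "c i - c' i = s' i - s i" for i using fun_cong[OF e, of i] by simp
    have "posS m (\<lambda>i. c i - c' i) \<le> int rp + int rm"
      using pos_diff_le[of m s' s] s s' unfolding ei S_ball_alt by auto
    moreover have "negS m (\<lambda>i. c i - c' i) \<le> int rm + int rp"
      using neg_diff_le[of m s' s] s s' unfolding ei S_ball_alt by auto
    ultimately have "dist_a m c c' < d" using r unfolding dist_a_eq by auto
    moreover have "d \<le> dist_a m c c'" using mind that by auto
    ultimately show False by simp
  qed
  have inj: "inj_on (\<lambda>s. \<lambda>i. c i + s i) ?S" for c
    by (rule inj_onI) (metis (no_types, lifting) add_left_cancel ext)
  have "card (\<Union>c\<in>?D. ?T c) = (\<Sum>c\<in>?D. card (?T c))"
    by (rule card_UN_disjoint[OF finD]) (auto simp: S_ball_finite disj)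
  also have "\<dots> = (\<Sum>c\<in>?D. card ?S)" by (rule sum.cong[OF refl], rule card_image, rule inj)
  also have "\<dots> = card ?D * card ?S" by simp
  finally have 1: "card (\<Union>c\<in>?D. ?T c) = card ?D * card ?S" .
  have sub: "(\<Union>c\<in>?D. ?T c) \<subseteq> cube m (k + max rp rm)" using translate_in_cube by blast
  have "card (\<Union>c\<in>?D. ?T c) \<le> card (cube m (k + max rp rm))"
    by (rule card_mono[OF _ sub]) (use cube_fin_card in blast)
  also have "\<dots> \<le> (2*(k + max rp rm)+1)^m" using cube_fin_card by blast
  finally show ?thesis using 1 by simp
qed

lemma ratio_lim: "(\<lambda>k::nat. ((2*(real k + R)+1)/(2*real k+1))^m) \<longlonglongrightarrow> 1"
proof -
  have 0: "(\<lambda>k::nat. 2*R/(2*real k+1)) \<longlonglongrightarrow> 0"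
  proof -
    have "(\<lambda>k::nat. 2*R * inverse (real (Suc k))) \<longlonglongrightarrow> 2*R*0"
      by (intro tendsto_mult tendsto_const LIMSEQ_inverse_real_of_nat)
    have a: "(\<lambda>k::nat. \<bar>2*R\<bar> * inverse (real (Suc k))) \<longlonglongrightarrow> 0"
      by (intro tendsto_mult_right_zero LIMSEQ_inverse_real_of_nat)
    have a': "(\<lambda>k::nat. - (\<bar>2*R\<bar> * inverse (real (Suc k)))) \<longlonglongrightarrow> 0"
      using tendsto_minus[OF a] by simp
    have b: "\<bar>2*R/(2*real k+1)\<bar> \<le> \<bar>2*R\<bar> * inverse (real (Suc k))" for k :: nat
    proof -
      have "\<bar>2*R/(2*real k+1)\<bar> = \<bar>2*R\<bar> / (2*real k+1)" by (simp add: abs_divide)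
      also have "\<dots> \<le> \<bar>2*R\<bar> / (real (Suc k))"
        by (rule divide_left_mono) auto
      finally show ?thesis by (simp add: divide_inverse)
    qed
    show ?thesis
    proof (rule tendsto_sandwich[OF _ _ a' a])
      show "\<forall>\<^sub>F k in sequentially. - (\<bar>2*R\<bar> * inverse (real (Suc k))) \<le> 2*R/(2*real k+1)"
        using b by (intro always_eventually allI) (smt (verit))
      show "\<forall>\<^sub>F k in sequentially. 2*R/(2*real k+1) \<le> \<bar>2*R\<bar> * inverse (real (Suc k))"
        using b by (intro always_eventually allI) (smt (verit))
    qed
  qed
  have e: "(2*(real k + R)+1)/(2*real k+1) = 1 + 2*R/(2*real k+1)" for k :: nat
    by (simp add: field_simps)
  have "(\<lambda>k::nat. (1 + 2*R/(2*real k+1))^m) \<longlonglongrightarrow> (1+0)^m"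
    by (intro tendsto_power tendsto_add tendsto_const 0)
  then show ?thesis unfolding e by simp
qed


lemma density_bound:
  assumes mind: "\<forall>x\<in>C. \<forall>y\<in>C. x \<noteq> y \<longrightarrow> d \<le> dist_a m x y"
    and r: "int rp + int rm < d"
  shows "upper_density m C \<le> ereal (1 / real (card (S_ball m rp rm)))"
proof -
  define N where "N = card (S_ball m rp rm)"
  define R where "R = max rp rm"
  have N0: "N \<ge> 1"
  proof -
    have "(\<lambda>_. 0) \<in> S_ball m rp rm" unfolding S_ball_alt zvec_def posS_def negS_def by simp
    then show ?thesis unfolding N_def using S_ball_finite[of m rp rm] card_gt_0_iff[of "S_ball m rp rm"] by auto
  qed
  have le: "real (card (C \<inter> cube m k)) / real (2 * k + 1) ^ m
      \<le> ((2*(real k + real R)+1)/(2*real k+1))^m / real N" for k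
  proof -
    have "real (card (C \<inter> cube m k)) * real N \<le> real ((2*(k+R)+1)^m)"
      using packing[OF mind r, of k] unfolding N_def R_def by (simp only: of_nat_mult[symmetric] of_nat_le_iff)
    then have "real (card (C \<inter> cube m k)) * real N \<le> (2*(real k+real R)+1)^m" by (simp add: algebra_simps)
    then have "real (card (C \<inter> cube m k)) \<le> (2*(real k+real R)+1)^m / real N"
      using N0 by (simp add: pos_le_divide_eq)
    then have "real (card (C \<inter> cube m k)) / real (2 * k + 1) ^ m \<le>
       (2*(real k+real R)+1)^m / real N / real (2 * k + 1) ^ m"
      by (rule divide_right_mono) simp
    also have "\<dots> = (2*(real k+real R)+1)^m / real N / (2*real k+1)^m" by (simp add: add.commute)
    also have "\<dots> = ((2*(real k + real R)+1)/(2*real k+1))^m / real N"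
      by (simp add: power_divide)
    finally show ?thesis .
  qed
  have lim: "(\<lambda>k. ereal (((2*(real k + real R)+1)/(2*real k+1))^m / real N)) \<longlonglongrightarrow> ereal (1 / real N)"
    by (intro tendsto_ereal tendsto_divide ratio_lim tendsto_const) (use N0 in auto)
  have "upper_density m C \<le> limsup (\<lambda>k. ereal (((2*(real k + real R)+1)/(2*real k+1))^m / real N))"
    unfolding upper_density_def by (rule Limsup_mono) (use le in auto)
  also have "\<dots> = ereal (1 / real N)" by (rule lim_imp_Limsup[OF _ lim]) simp
  finally show ?thesis unfolding N_def .
qed



lemma L1: "(n+1)^b \<le> fact b * ((n+b) choose b)"
proof (induction b)
  case 0 then show ?case by simp
next
  case (Suc b)
  have e: "Suc b * (Suc (n+b) choose Suc b) = Suc (n+b) * ((n+b) choose b)"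
    by (rule Suc_times_binomial)
  have "(n+1)^Suc b = (n+1) * (n+1)^b" by simp
  also have "\<dots> \<le> Suc (n+b) * (fact b * ((n+b) choose b))"
    by (rule mult_mono) (use Suc in auto)
  also have "\<dots> = fact b * (Suc b * (Suc (n+b) choose Suc b))" unfolding e by (simp only: ac_simps)
  also have "\<dots> = fact (Suc b) * ((n + Suc b) choose Suc b)"
    by (simp only: fact_Suc add_Suc_right of_nat_id ac_simps)
  finally show ?case .
qed

lemma L1r: "real (n+1)^b \<le> fact b * real ((n+b) choose b)"
proof -
  have "real ((n+1)^b) \<le> real (fact b * ((n+b) choose b))" using L1 by (simp only: of_nat_le_iff)
  then show ?thesis by (simp add: of_nat_fact)
qed

lemma g_lower2:
  assumes "a \<le> m"
  shows "((m+a) choose a) * ((b+(m-a)) choose b) \<le> g m a b"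
proof -
  have v: "(\<Sum>k\<le>m. (m choose k) * (a choose k)) = (m+a) choose a"
  proof -
    have "(\<Sum>k\<le>m. (m choose k) * (a choose k)) = (\<Sum>k\<le>a. (m choose k) * (a choose k))"
      by (rule sum.mono_neutral_right) (use assms in auto)
    also have "\<dots> = (\<Sum>k\<le>a. (m choose k) * (a choose (a - k)))"
      by (rule sum.cong[OF refl]) (simp add: binomial_symmetric[symmetric])
    also have "\<dots> = (m+a) choose a" by (rule vandermonde)
    finally show ?thesis .
  qed
  have "((m+a) choose a) * ((b+(m-a)) choose b) = (\<Sum>k\<le>m. (m choose k) * (a choose k) * ((b+(m-a)) choose b))"
    unfolding v[symmetric] by (simp add: sum_distrib_right)
  also have "\<dots> \<le> g m a b" unfolding g_def
  proof (rule sum_mono)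
    fix k assume k: "k \<in> {..m}"
    show "(m choose k) * (a choose k) * ((b+(m-a)) choose b) \<le> (m choose k) * (a choose k) * ((b + (m-k)) choose (m-k))"
    proof (cases "k \<le> a")
      case True
      have "((b+(m-a)) choose b) \<le> ((b+(m-k)) choose b)" by (rule binomial_right_mono) (use True in auto)
      also have "\<dots> = ((b + (m-k)) choose (m-k))" by (metis add_diff_cancel_left' binomial_symmetric le_add1)
      finally have X: "((b+(m-a)) choose b) \<le> ((b + (m-k)) choose (m-k))" .
      show ?thesis by (rule mult_left_mono[OF X]) simp
    next
      case False then show ?thesis by simp
    qed
  qed
  finally show ?thesis .
qed

lemma bound_ii:
  assumes "1 \<le> a" "a \<le> m"
  shows "real (m+1-a)^(a+b) < fact a * fact b * real (g m a b)"
proof -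
  have "real (m+1-a)^a < real (m+1)^a"
    by (rule power_strict_mono) (use assms in auto)
  also have "\<dots> \<le> fact a * real ((m+a) choose a)" using L1r[of m a] by simp
  finally have 1: "real (m+1-a)^a < fact a * real ((m+a) choose a)" .
  have 2: "real (m+1-a)^b \<le> fact b * real ((b+(m-a)) choose b)"
    using L1r[of "m-a" b] assms by (simp add: add.commute Suc_diff_le)
  have p: "0 < real (m+1-a)^b" using assms by simp
  have "real (m+1-a)^(a+b) = real (m+1-a)^a * real (m+1-a)^b" by (simp add: power_add)
  also have "\<dots> < (fact a * real ((m+a) choose a)) * (fact b * real ((b+(m-a)) choose b))"
    by (rule mult_less_le_imp_less[OF 1 2]) (use p in auto)
  also have "\<dots> = fact a * fact b * real (((m+a) choose a) * ((b+(m-a)) choose b))" by simp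
  also have "\<dots> \<le> fact a * fact b * real (g m a b)"
  proof (rule mult_left_mono)
    show "real (((m+a) choose a) * ((b+(m-a)) choose b)) \<le> real (g m a b)"
      using g_lower2[OF assms(2), of b] by (simp only: of_nat_le_iff)
  qed simp
  finally show ?thesis .
qed

lemma bound_iii:
  fixes c :: real
  assumes m: "1 \<le> m" and c: "0 < c" and am: "c < real a - real m + 1" and bc: "c \<le> real b + 1"
  shows "real ((2*m) choose m) * c^m < fact m * real (g m a b)"
proof -
  have aM: "m \<le> a" using am c by linarith
  have tm: "real (m choose k)^2 * c^m \<le> fact m * real ((m choose k) * (a choose k) * ((b + (m-k)) choose (m-k)))"
    and strict: "k = m \<Longrightarrow> real (m choose k)^2 * c^m < fact m * real ((m choose k) * (a choose k) * ((b + (m-k)) choose (m-k)))"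
    if k: "k \<le> m" for k
  proof -
    have ck: "c \<le> real (a - k + 1)" using am k aM by auto
    have A: "real (a-k+1)^k \<le> fact k * real (a choose k)"
      using L1r[of "a-k" k] k aM by simp
    have B: "c^(m-k) \<le> fact (m-k) * real ((b + (m-k)) choose (m-k))"
    proof -
      have "c^(m-k) \<le> real (b+1)^(m-k)" by (rule power_mono) (use bc c in auto)
      then show ?thesis using L1r[of b "m-k"] by linarith
    qed
    have fm: "fact m = real (m choose k) * fact k * fact (m-k)"
      using binomial_fact_lemma[OF k] by (metis (mono_tags, lifting) mult.assoc mult.commute of_nat_fact of_nat_mult)
    have Bp: "0 \<le> c^(m-k)" using c by simp
    have eq: "fact m * real ((m choose k) * (a choose k) * ((b + (m-k)) choose (m-k)))
        = real (m choose k)^2 * ((fact k * real (a choose k)) * (fact (m-k) * real ((b + (m-k)) choose (m-k))))"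
      unfolding fm by (simp add: power2_eq_square algebra_simps)
    have cm: "c^m = c^k * c^(m-k)" using k by (simp add: power_add[symmetric])
    have le1: "c^k \<le> real (a-k+1)^k" by (rule power_mono[OF ck]) (use c in auto)
    show "real (m choose k)^2 * c^m \<le> fact m * real ((m choose k) * (a choose k) * ((b + (m-k)) choose (m-k)))"
      unfolding eq cm
      by (intro mult_left_mono mult_mono order.trans[OF le1 A] B) (use c in auto)
    assume km: "k = m"
    have lt1: "c^k < real (a-k+1)^k" by (rule power_strict_mono) (use am km m c aM in auto)
    have "c^k * c^(m-k) < (fact k * real (a choose k)) * (fact (m-k) * real ((b + (m-k)) choose (m-k)))"
      using km lt1 A by simp
    moreover have "real (m choose k)^2 > 0" using k by simp
    ultimately show "real (m choose k)^2 * c^m < fact m * real ((m choose k) * (a choose k) * ((b + (m-k)) choose (m-k)))"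
      unfolding eq cm by simp
  qed
  have "real ((2*m) choose m) * c^m = (\<Sum>k\<le>m. real (m choose k)^2 * c^m)"
    unfolding choose_square_sum[symmetric] by (simp add: sum_distrib_right)
  also have "\<dots> < (\<Sum>k\<le>m. fact m * real ((m choose k) * (a choose k) * ((b + (m-k)) choose (m-k))))"
  proof (rule sum_strict_mono_ex1)
    show "\<forall>k\<in>{..m}. real (m choose k)^2 * c^m \<le> fact m * real ((m choose k) * (a choose k) * ((b + (m-k)) choose (m-k)))"
      by (intro ballI tm) simp
    show "\<exists>k\<in>{..m}. real (m choose k)^2 * c^m < fact m * real ((m choose k) * (a choose k) * ((b + (m-k)) choose (m-k)))"
      by (rule bexI[of _ m], rule strict) auto
  qed simp
  also have "\<dots> = fact m * real (g m a b)" unfolding g_def by (simp add: sum_distrib_left)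
  finally show ?thesis .
qed



lemma S_card_pos: "0 < card (S_ball m a b)"
proof -
  have "(\<lambda>_. 0) \<in> S_ball m a b" unfolding S_ball_alt zvec_def posS_def negS_def by simp
  then show ?thesis using S_ball_finite[of m a b] card_gt_0_iff[of "S_ball m a b"] by auto
qed

lemma ceil_half: "\<lceil>real_of_int e / 2\<rceil> = (e + 1) div 2"
proof -
  have "e = 2*(e div 2) \<or> e = 2*(e div 2)+1" by presburger
  then obtain q where "e = 2*q \<or> e = 2*q+1" by blast
  then show ?thesis
  proof
    assume e: "e = 2*q"
    then have "(e+1) div 2 = q" by presburger
    then show ?thesis using e by (intro ceiling_unique) auto
  next
    assume e: "e = 2*q+1"
    then have "(e+1) div 2 = q+1" by presburger
    then show ?thesis using e by (intro ceiling_unique) auto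
  qed
qed

lemma floor_half: "\<lfloor>real_of_int e / 2\<rfloor> = e div 2"
  using floor_divide_of_int_eq[of e 2] by simp

lemma part_ii:
  assumes mind: "\<forall>x\<in>C. \<forall>y\<in>C. x \<noteq> y \<longrightarrow> d \<le> dist_a m x y"
    and d: "2 \<le> d" "d \<le> 2 * int m + 1"
  shows "upper_density m C <
              ereal (fact (nat \<lceil>(real_of_int d - 1) / 2\<rceil>)
                   * fact (nat \<lfloor>(real_of_int d - 1) / 2\<rfloor>)
                   * (real m + 1 - real_of_int \<lceil>(real_of_int d - 1) / 2\<rceil>)
                       powr (1 - real_of_int d))"
proof -
  have r: "real_of_int d - 1 = real_of_int (d - 1)" by simp
  define a where "a = nat (d div 2)"
  define b where "b = nat ((d - 1) div 2)"
  have ca: "\<lceil>(real_of_int d - 1) / 2\<rceil> = int a" unfolding r ceil_half a_def using d by simp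
  have fb: "\<lfloor>(real_of_int d - 1) / 2\<rfloor> = int b" unfolding r floor_half b_def using d by simp
  have "d div 2 \<ge> 0" "(d - 1) div 2 \<ge> 0" using d by presburger+
  then have "int a + int b = d div 2 + (d - 1) div 2" unfolding a_def b_def by simp
  also have "\<dots> = d - 1" by presburger
  finally have ab: "int a + int b = d - 1" .
  have h1: "1 \<le> d div 2" "d div 2 \<le> int m" using d by presburger+
  have a1: "1 \<le> a" unfolding a_def using h1 by simp
  have am: "a \<le> m" unfolding a_def using h1 by (simp add: nat_le_iff)
  define N where "N = card (S_ball m a b)"
  have Ng: "N = g m a b" unfolding N_def by (rule card_S_g)
  have dens: "upper_density m C \<le> ereal (1 / real N)"
    unfolding N_def by (rule density_bound[OF mind]) (use ab in simp)
  have bnd: "real (m+1-a)^(a+b) < fact a * fact b * real N" unfolding Ng by (rule bound_ii[OF a1 am])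
  have base: "real m + 1 - real_of_int \<lceil>(real_of_int d - 1) / 2\<rceil> = real (m+1-a)"
    unfolding ca using am by simp
  have ex: "1 - real_of_int d = - real (a+b)" using ab by linarith
  have pos: "0 < real (m+1-a)" using am by simp
  have pw: "real (m+1-a) powr (1 - real_of_int d) = 1 / real (m+1-a)^(a+b)"
    unfolding ex powr_minus powr_realpow[OF pos] by (simp add: divide_inverse)
  have Npos: "0 < real N" unfolding N_def using S_card_pos by simp
  have "1 / real N < fact a * fact b * (1 / real (m+1-a)^(a+b))"
    using bnd Npos pos by (simp add: field_simps)
  then have "ereal (1 / real N) < ereal (fact (nat \<lceil>(real_of_int d - 1) / 2\<rceil>)
                   * fact (nat \<lfloor>(real_of_int d - 1) / 2\<rfloor>)
                   * (real m + 1 - real_of_int \<lceil>(real_of_int d - 1) / 2\<rceil>)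
                       powr (1 - real_of_int d))"
    unfolding base pw unfolding ca fb by simp
  then show ?thesis using dens by (rule le_less_trans[rotated])
qed

lemma part_iii:
  assumes mind: "\<forall>x\<in>C. \<forall>y\<in>C. x \<noteq> y \<longrightarrow> d \<le> dist_a m x y"
    and m: "1 \<le> m" and dm: "int m < d"
  shows "upper_density m C <
              ereal (2 ^ m * fact m ^ 3 / fact (2 * m)
                   * (real_of_int d - real m) powr (- real m))"
proof -
  define t where "t = d - int m"
  define q where "q = (t + 1) div 2"
  define c where "c = real_of_int t / 2"
  have t1: "1 \<le> t" unfolding t_def using dm by simp
  have q1: "1 \<le> q" unfolding q_def using t1 by presburger
  have qt: "2*q \<le> t + 1" "t \<le> 2*q" unfolding q_def by presburger+
  define b where "b = nat q - 1"
  define a where "a = nat (d - q)"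
  have bq: "int b + 1 = q" unfolding b_def using q1 by simp
  have aq: "int a = d - q" unfolding a_def using qt t_def dm by simp
  have ab: "int a + int b < d" using aq bq by simp
  have c0: "0 < c" unfolding c_def using t1 by simp
  have ca: "c < real a - real m + 1"
  proof -
    have "real_of_int t < real_of_int (2*(d - q - int m + 1))" using qt t_def by simp
    then have "real_of_int t / 2 < real_of_int (d - q) - real m + 1" by simp
    then show ?thesis unfolding c_def using aq by (metis of_int_of_nat_eq)
  qed
  have cb: "c \<le> real b + 1"
  proof -
    have "real_of_int t \<le> real_of_int (2*q)" using qt by linarith
    then have "real_of_int t / 2 \<le> real_of_int q" by simp
    then show ?thesis unfolding c_def using bq by (metis of_int_of_nat_eq of_int_1 of_int_add)
  qed
  define N where "N = card (S_ball m a b)"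
  have Ng: "N = g m a b" unfolding N_def by (rule card_S_g)
  have dens: "upper_density m C \<le> ereal (1 / real N)"
    unfolding N_def by (rule density_bound[OF mind ab])
  have bnd: "real ((2*m) choose m) * c^m < fact m * real N"
    unfolding Ng by (rule bound_iii[OF m c0 ca cb])
  have Cpos: "0 < real ((2*m) choose m)" by simp
  have Npos: "0 < real N" unfolding N_def using S_card_pos by simp
  have dmc: "real_of_int d - real m = 2 * c" unfolding c_def t_def by simp
  have pw: "(real_of_int d - real m) powr (- real m) = 1 / (2^m * c^m)"
  proof -
    have "(2*c) powr real m = (2*c)^m" using c0 by (simp add: powr_realpow)
    then show ?thesis unfolding dmc powr_minus by (simp add: power_mult_distrib divide_inverse)
  qed
  have f2m: "fact (2*m) = real ((2*m) choose m) * fact m * fact m"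
  proof -
    have "fact m * fact (2*m - m) * ((2*m) choose m) = (fact (2*m) :: nat)"
      by (rule binomial_fact_lemma) simp
    then have "real (fact m * fact m * ((2*m) choose m)) = real (fact (2*m))" by simp
    then show ?thesis by (simp add: of_nat_fact algebra_simps)
  qed
  have fpos: "(0::real) < fact m" by simp
  have rhs: "2 ^ m * fact m ^ 3 / fact (2 * m) * (real_of_int d - real m) powr (- real m)
      = fact m / (real ((2*m) choose m) * c^m)"
    unfolding pw f2m using c0 Cpos fpos by (simp add: field_simps power3_eq_cube)
  have "1 / real N < fact m / (real ((2*m) choose m) * c^m)"
    using bnd Npos c0 Cpos by (simp add: field_simps)
  then have "ereal (1 / real N) < ereal (2 ^ m * fact m ^ 3 / fact (2 * m) * (real_of_int d - real m) powr (- real m))"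
    unfolding rhs by simp
  then show ?thesis using dens by (rule le_less_trans[rotated])
qed

theorem mainTheorem7:
  fixes m :: nat and C :: "(nat \<Rightarrow> int) set" and d :: int
  assumes "m \<ge> 1"
    and "C \<subseteq> zvec m"
    and "has_min_dist m C d"
  shows "(\<forall>rp rm :: nat. int rp + int rm < d \<longrightarrow>
            upper_density m C \<le> ereal (1 / real (card (S_ball m rp rm))))
       \<and> (2 \<le> d \<and> d \<le> 2 * int m + 1 \<longrightarrow>
            upper_density m C <
              ereal (fact (nat \<lceil>(real_of_int d - 1) / 2\<rceil>)
                   * fact (nat \<lfloor>(real_of_int d - 1) / 2\<rfloor>)
                   * (real m + 1 - real_of_int \<lceil>(real_of_int d - 1) / 2\<rceil>)
                       powr (1 - real_of_int d)))
       \<and> (1 \<le> m \<and> int m < d \<longrightarrow>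
            upper_density m C <
              ereal (2 ^ m * fact m ^ 3 / fact (2 * m)
                   * (real_of_int d - real m) powr (- real m)))"
proof -
  have mind: "\<forall>x\<in>C. \<forall>y\<in>C. x \<noteq> y \<longrightarrow> d \<le> dist_a m x y"
    using assms(3) unfolding has_min_dist_def by blast
  show ?thesis using density_bound[OF mind] part_ii[OF mind] part_iii[OF mind] by blast
qed


end
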